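(* For all positive integers $k$, $n$ and $\delta$, $$\Phi_k(n)\le\left(\frac{\delta\,(1+\tau)\,k!}{\zeta(k,\delta)}\right)^{1/k} n^{1/k}+\frac{e-1}{e}\,k,$$ where $\tau=0$ if $k$ is even and $\tau=1$ if $k$ is odd.
   Context: A finite set $\mathcal A$ of non-negative integers is a $B_k$-sequence if all sums $a_1+\dots+a_k$ of $k$ elements of $\mathcal A$ (repetitions allowed) are different, i.e. distinct multisets $\{a_1,\dots,a_k\}$ of elements of $\mathcal A$ have distinct sums. $\Phi_k(n)$ is the maximum size of a $B_k$-sequence contained in $[0,n]$. For positive integers $m$ and $\delta$, a $\delta$-deviation set of size $m$ is a finite sequence $(\alpha_1,\dots,\alpha_\ell)$ of positive integers such that (i) $\sum_i\alpha_i=m$; (ii) $\big|\sum_i\alpha_{2i-1}-\sum_i\alpha_{2i}\big|\le 1$; (iii) $\big|\sum_{1\le i\le j}(-1)^{i-1}\alpha_i\big|\le\delta$ for every $j\ge1$; and $\zeta(m,\delta)$ is the number of $\delta$-deviation sets of size $m$. *)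

theory Defs
  imports Complex_Main "HOL-Library.Multiset"
begin

definition is_Bk :: "nat \<Rightarrow> nat set \<Rightarrow> bool" where
  "is_Bk k A \<longleftrightarrow> finite A \<and>
     (\<forall>M N. set_mset M \<subseteq> A \<and> set_mset N \<subseteq> A \<and> size M = k \<and> size N = k
        \<and> sum_mset M = sum_mset N \<longrightarrow> M = N)"

definition Phi :: "nat \<Rightarrow> nat \<Rightarrow> nat" where
  "Phi k n = Max {card A | A. A \<subseteq> {0..n} \<and> is_Bk k A}"

text \<open>Alternating partial sum: sum over i = 1..j of (-1)^(i-1) alpha_i
  (list is 0-indexed, so entry i of the list is alpha_(i+1)).\<close>
definition alt_psum :: "nat list \<Rightarrow> nat \<Rightarrow> int" where
  "alt_psum xs j = (\<Sum>i<j. (-1) ^ i * int (xs ! i))"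

definition is_dev_set :: "nat \<Rightarrow> nat \<Rightarrow> nat list \<Rightarrow> bool" where
  "is_dev_set m \<delta> xs \<longleftrightarrow>
     (\<forall>x\<in>set xs. 0 < x) \<and>
     sum_list xs = m \<and>
     \<bar>alt_psum xs (length xs)\<bar> \<le> 1 \<and>
     (\<forall>j\<in>{1..length xs}. \<bar>alt_psum xs j\<bar> \<le> int \<delta>)"

definition zeta :: "nat \<Rightarrow> nat \<Rightarrow> nat" where
  "zeta m \<delta> = card {xs. is_dev_set m \<delta> xs}"

end

theory Submission
  imports Defs
begin


definition ww :: "real \<Rightarrow> real" where
  "ww t = - t * ln t - (1 - t) * ln (1 + (exp 1 - 1) * t)"
definition ph :: "real \<Rightarrow> real" where
  "ph t = ln (1 + (exp 1 - 1) * t) - ln t - exp 1 / (1 + (exp 1 - 1) * t)"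

lemma e_gt1: "exp (1::real) > 1" by simp

lemma D_pos: "t \<ge> 0 \<Longrightarrow> 1 + (exp 1 - 1) * t > (0::real)"
  by (smt (verit) e_gt1 mult_nonneg_nonneg)

lemma ww_deriv: "t > 0 \<Longrightarrow> (ww has_real_derivative ph t) (at t)"
proof -
  assume t: "t > 0"
  define E where "E = exp (1::real) - 1"
  have D: "1 + E * t > 0" using D_pos t E_def by simp
  have d1: "((\<lambda>t. t * ln t) has_real_derivative (ln t + 1)) (at t)"
    by (rule derivative_eq_intros refl | use t in simp)+
  have d2: "((\<lambda>t. ln (1 + E * t)) has_real_derivative (E / (1 + E * t))) (at t)"
    by (rule derivative_eq_intros refl | use D in simp)+
  have d3: "((\<lambda>t. (1 - t) * ln (1 + E * t)) has_real_derivative (- ln (1 + E*t) + (1 - t) * (E / (1 + E * t)))) (at t)"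
    using DERIV_mult[OF DERIV_diff[OF DERIV_const[of "1::real"] DERIV_ident] d2] by (simp add: mult.commute)
  have "((\<lambda>t. - (t * ln t) - (1 - t) * ln (1 + E * t)) has_real_derivative (- (ln t + 1) - (- ln (1 + E*t) + (1 - t) * (E / (1 + E * t))))) (at t)"
    by (rule DERIV_diff[OF DERIV_minus[OF d1] d3])
  moreover have "- (ln t + 1) - (- ln (1 + E*t) + (1 - t) * (E / (1 + E * t))) = ph t"
    unfolding ph_def E_def[symmetric] using D by (simp add: field_simps E_def)
  moreover have "ww = (\<lambda>t. - (t * ln t) - (1 - t) * ln (1 + E * t))"
    unfolding ww_def E_def by auto
  ultimately show ?thesis by simp
qed

lemma alg: "(E::real) > 0 \<Longrightarrow> t > 0 \<Longrightarrow> E / (1 + E * t) - 1 / t - (- (E + 1) * E / (1 + E * t)^2) =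
      (E^2 * t - 1) / (t * (1 + E * t)^2)"
proof -
  assume E: "E > 0" and t: "t > 0"
  have D: "1 + E * t > 0" using E t by (simp add: add_pos_pos)
  have "E / (1 + E * t) - 1 / t - (- (E + 1) * E / (1 + E * t)^2) =
     (E * t * (1 + E * t) - (1 + E * t)^2 + (E + 1) * E * t) / (t * (1 + E * t)^2)"
    using D t by (simp add: divide_simps) (simp add: power2_eq_square algebra_simps)
  also have "E * t * (1 + E * t) - (1 + E * t)^2 + (E + 1) * E * t = E^2 * t - 1"
    by (simp add: power2_eq_square algebra_simps)
  finally show ?thesis .
qed

lemma ph_deriv: "t > 0 \<Longrightarrow> (ph has_real_derivative (((exp 1 - 1)^2 * t - 1) / (t * (1 + (exp 1 - 1) * t)^2))) (at t)"
proof -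
  assume t: "t > 0"
  define E where "E = exp (1::real) - 1"
  have D: "1 + E * t > 0" using D_pos t E_def by simp
  have d2: "((\<lambda>t. ln (1 + E * t)) has_real_derivative (E / (1 + E * t))) (at t)"
    by (rule derivative_eq_intros refl | use D in simp)+
  have d1: "(ln has_real_derivative (1 / t)) (at t)"
    using DERIV_ln_divide t by blast
  have d3: "((\<lambda>t. exp 1 / (1 + E * t)) has_real_derivative (- exp 1 * E / (1 + E * t)^2)) (at t)"
    by (rule derivative_eq_intros refl | use D in \<open>simp add: power2_eq_square\<close>)+
  have "((\<lambda>t. ln (1 + E * t) - ln t - exp 1 / (1 + E * t)) has_real_derivative
         (E / (1 + E * t) - 1 / t - (- exp 1 * E / (1 + E * t)^2))) (at t)"
    by (rule DERIV_diff[OF DERIV_diff[OF d2 d1] d3])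
  moreover have "E / (1 + E * t) - 1 / t - (- exp 1 * E / (1 + E * t)^2) =
      ((exp 1 - 1)^2 * t - 1) / (t * (1 + (exp 1 - 1) * t)^2)"
    using alg[OF _ t, of E] e_gt1 unfolding E_def by simp
  moreover have "ph = (\<lambda>t. ln (1 + E * t) - ln t - exp 1 / (1 + E * t))"
    unfolding ph_def E_def by auto
  ultimately show ?thesis by simp
qed

definition t1 :: real where "t1 = 1 / (exp 1 - 1)^2"

lemma t1_pos: "t1 > 0"
proof -
  have "exp (1::real) - 1 > 0" using e_gt1 by simp
  then show ?thesis unfolding t1_def by (intro divide_pos_pos) auto
qed

lemma t1_le1: "t1 \<le> 1"
proof -
  have "exp (1::real) \<ge> 2" using exp_ge_add_one_self[of 1] by simp
  then have "(exp 1 - 1)^2 \<ge> (1::real)" by (smt (verit) one_le_power)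
  moreover have "(1::real)/a \<le> 1" if "a \<ge> 1" for a using that by simp
  ultimately show ?thesis unfolding t1_def by blast
qed

lemma ph_incr: assumes "t1 \<le> x" "x \<le> y" shows "ph x \<le> ph y"
proof (rule DERIV_nonneg_imp_nondecreasing[OF assms(2)])
  fix z assume z: "x \<le> z" "z \<le> y"
  have zp: "z > 0" using t1_pos assms z by simp
  have "(exp 1 - 1)^2 * z - 1 \<ge> 0"
  proof -
    have "(exp 1 - 1)^2 * t1 = 1" unfolding t1_def using e_gt1 by simp
    moreover have "(exp 1 - 1)^2 * t1 \<le> (exp 1 - 1)^2 * z" using assms z by simp
    ultimately show ?thesis by simp
  qed
  then show "\<exists>d. (ph has_real_derivative d) (at z) \<and> 0 \<le> d"
    using ph_deriv[OF zp] zp D_pos[of z] by (intro exI[of _ "((exp 1 - 1)^2 * z - 1) / (z * (1 + (exp 1 - 1) * z)^2)"]) simp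
qed

lemma ph_decr: assumes "0 < x" "x \<le> y" "y \<le> t1" shows "ph y \<le> ph x"
proof (rule DERIV_nonpos_imp_nonincreasing[OF assms(2)])
  fix z assume z: "x \<le> z" "z \<le> y"
  have zp: "z > 0" using assms z by simp
  have "(exp 1 - 1)^2 * z - 1 \<le> 0"
  proof -
    have "(exp 1 - 1)^2 * t1 = 1" unfolding t1_def using e_gt1 by simp
    moreover have "(exp 1 - 1)^2 * t1 \<ge> (exp 1 - 1)^2 * z" using assms z by simp
    ultimately show ?thesis by simp
  qed
  then show "\<exists>d. (ph has_real_derivative d) (at z) \<and> d \<le> 0"
    using ph_deriv[OF zp] zp D_pos[of z]
    by (intro exI[of _ "((exp 1 - 1)^2 * z - 1) / (z * (1 + (exp 1 - 1) * z)^2)"])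
       (simp add: divide_nonpos_pos)
qed

lemma ph1: "ph 1 = 0" unfolding ph_def by simp

lemma ph_le0: "t1 \<le> t \<Longrightarrow> t \<le> 1 \<Longrightarrow> ph t \<le> 0"
  using ph_incr[of t 1] ph1 by simp

lemma ww_dec: assumes "0 < x" "x \<le> y" "\<And>z. x \<le> z \<Longrightarrow> z \<le> y \<Longrightarrow> ph z \<le> 0"
  shows "ww y \<le> ww x"
proof (rule DERIV_nonpos_imp_nonincreasing[OF assms(2)])
  fix z assume z: "x \<le> z" "z \<le> y"
  then have "z > 0" using assms(1) by simp
  then show "\<exists>d. (ww has_real_derivative d) (at z) \<and> d \<le> 0"
    using ww_deriv assms(3)[OF z] by blast
qed

lemma ww_inc: assumes "0 < x" "x \<le> y" "\<And>z. x \<le> z \<Longrightarrow> z \<le> y \<Longrightarrow> ph z \<ge> 0"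
  shows "ww x \<le> ww y"
proof (rule DERIV_nonneg_imp_nondecreasing[OF assms(2)])
  fix z assume z: "x \<le> z" "z \<le> y"
  then have "z > 0" using assms(1) by simp
  then show "\<exists>d. (ww has_real_derivative d) (at z) \<and> d \<ge> 0"
    using ww_deriv assms(3)[OF z] by blast
qed

lemma ww1: "ww 1 = 0" unfolding ww_def by simp
lemma ww0: "ww 0 = 0" unfolding ww_def by simp

lemma ww_small: assumes "0 < x" "x \<le> exp (- (exp 1 - 1))" shows "ww x \<ge> 0"
proof -
  define E where "E = exp (1::real) - 1"
  have E: "E > 0" using e_gt1 E_def by simp
  have "ln x \<le> ln (exp (- E))" using assms E_def by (subst ln_le_cancel_iff) auto
  then have "ln x \<le> - E" by simp
  then have a: "- x * ln x \<ge> x * E" using assms(1)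
  proof -
    have "x * ln x \<le> x * (- E)" using mult_left_mono[OF \<open>ln x \<le> - E\<close>] assms(1) by simp
    then show ?thesis by simp
  qed
  have b: "ln (1 + E * x) \<le> E * x"
    using ln_add_one_self_le_self[of "E * x"] assms(1) E by simp
  have "exp (- E) \<le> 1" using E by simp
  then have c: "0 \<le> 1 - x" "1 - x \<le> 1" using assms unfolding E_def[symmetric] by linarith+
  have d: "ln (1 + E * x) \<ge> 0" using assms(1) E by simp
  have "(1 - x) * ln (1 + E * x) \<le> 1 * ln (1 + E * x)"
    using c d by (intro mult_right_mono) auto
  with b have "(1 - x) * ln (1 + E * x) \<le> E * x" by simp
  with a show ?thesis unfolding ww_def E_def[symmetric] by (simp add: algebra_simps)
qed

lemma ww_nonneg: assumes "0 \<le> t" "t \<le> 1" shows "ww t \<ge> 0"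
proof (cases "t = 0")
  case True then show ?thesis using ww0 by simp
next
  case False
  then have tp: "t > 0" using assms by simp
  show ?thesis
  proof (cases "\<forall>z. t \<le> z \<and> z \<le> 1 \<longrightarrow> ph z \<le> 0")
    case True
    then have "ww 1 \<le> ww t" using ww_dec[OF tp assms(2)] by blast
    then show ?thesis using ww1 by simp
  next
    case False
    then obtain z where z: "t \<le> z" "z \<le> 1" "ph z > 0" by auto
    then have zt1: "z < t1" using ph_le0[of z] by (meson not_le not_less)
    have pos: "ph u \<ge> 0" if "0 < u" "u \<le> t" for u
      using ph_decr[of u z] that z zt1 by simp
    define x where "x = min t (exp (- (exp 1 - 1)))"
    have xp: "0 < x" "x \<le> t" "x \<le> exp (- (exp 1 - 1))" unfolding x_def using tp by auto
    have "ww x \<le> ww t" using ww_inc[OF xp(1,2)] pos xp by force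
    moreover have "ww x \<ge> 0" using ww_small xp by simp
    ultimately show ?thesis by simp
  qed
qed



definition FF :: "real \<Rightarrow> real" where "FF x = x * ln x - x"

lemma FF_step: assumes "j \<ge> 1" shows "FF j - FF (j - 1) \<le> ln j"
proof (cases "j = 1")
  case True then show ?thesis unfolding FF_def by simp
next
  case False
  then have j: "j > 1" using assms by simp
  have "ln (j / (j - 1)) \<le> j / (j - 1) - 1" using j by (intro ln_le_minus_one) auto
  also have "\<dots> = 1 / (j - 1)" using j by (simp add: field_simps)
  finally have "(j - 1) * ln (j / (j - 1)) \<le> (j - 1) * (1 / (j - 1))"
    using j by (intro mult_left_mono) auto
  then have "(j - 1) * (ln j - ln (j - 1)) \<le> 1" using j by (simp add: ln_div)
  then show ?thesis unfolding FF_def by (simp add: algebra_simps)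
qed

lemma key_ident: assumes "0 \<le> a" "a \<le> b" "0 < b"
  shows "b * ln b - a * ln a - (b - a) - (b - a) * ln (b - (exp 1 - 1) / exp 1 * (b - a)) = b * ww (a / b)"
proof -
  define E where "E = exp (1::real) - 1"
  have E: "E > 0" using e_gt1 E_def by simp
  have ee: "exp (1::real) = E + 1" using E_def by simp
  have "b - E / (E + 1) * (b - a) = (b + E * a) / (E + 1)" using E by (simp add: field_simps)
  moreover have pos: "b + E * a > 0" using assms E by (smt (verit) mult_nonneg_nonneg)
  ultimately have l1: "ln (b - E / (E + 1) * (b - a)) = ln (b + E * a) - 1"
    using E by (simp add: ln_div ee[symmetric])
  have l2: "ln (1 + E * (a / b)) = ln (b + E * a) - ln b"
  proof -
    have "1 + E * (a / b) = (b + E * a) / b" using assms by (simp add: field_simps)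
    then show ?thesis using pos assms by (simp add: ln_div)
  qed
  have l3: "a * ln (a / b) = a * ln a - a * ln b"
  proof (cases "a = 0")
    case False then show ?thesis using assms by (simp add: ln_div algebra_simps)
  qed simp
  have h1: "ln (b - (exp 1 - 1) / exp 1 * (b - a)) = ln (b + E * a) - 1"
    using l1 unfolding E_def by simp
  have h2: "b * ww (a / b) = - (a * ln (a / b)) - (b - a) * ln (1 + E * (a / b))"
    unfolding ww_def E_def using assms by (simp add: algebra_simps)
  show ?thesis unfolding h1 h2 l2 l3 by (simp add: algebra_simps)
qed

lemma prod_bound:
  fixes m k :: nat assumes "1 \<le> k" "k \<le> m"
  shows "(real m - (exp 1 - 1) / exp 1 * real k) ^ k \<le> (\<Prod>i<k. real m - real i)"
proof -
  define c where "c = (exp (1::real) - 1) / exp 1"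
  have c01: "0 < c" "c < 1" unfolding c_def using e_gt1 by (auto simp: field_simps)
  have pos: "real m - c * real k > 0"
  proof -
    have "c * real k < real k" using c01 assms by simp
    then show ?thesis using assms by linarith
  qed
  have posi: "real m - real i > 0" if "i < k" for i using that assms by simp
  have "(\<Sum>i<k. FF (real m - real i) - FF (real m - real (Suc i))) \<le> (\<Sum>i<k. ln (real m - real i))"
  proof (rule sum_mono)
    fix i assume "i \<in> {..<k}"
    then have "real m - real i \<ge> 1" using assms by auto
    then show "FF (real m - real i) - FF (real m - real (Suc i)) \<le> ln (real m - real i)"
      using FF_step[of "real m - real i"] by (simp add: algebra_simps)
  qed
  also have "(\<Sum>i<k. ln (real m - real i)) = ln (\<Prod>i<k. real m - real i)"
    using posi by (subst ln_prod) auto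
  finally have s1: "FF (real m) - FF (real m - real k) \<le> ln (\<Prod>i<k. real m - real i)"
    using sum_lessThan_telescope'[of "\<lambda>i. FF (real m - real i)" k] by simp
  have "FF (real m) - FF (real m - real k) - real k * ln (real m - c * real k)
        = real m * ww ((real m - real k) / real m)"
    using key_ident[of "real m - real k" "real m"] assms unfolding FF_def c_def by (simp add: algebra_simps)
  moreover have "ww ((real m - real k) / real m) \<ge> 0"
    using assms by (intro ww_nonneg) (auto simp: field_simps)
  ultimately have "real k * ln (real m - c * real k) \<le> FF (real m) - FF (real m - real k)"
    by (smt (verit) mult_nonneg_nonneg of_nat_0_le_iff)
  with s1 have "ln ((real m - c * real k) ^ k) \<le> ln (\<Prod>i<k. real m - real i)"
    using pos by (simp add: ln_realpow)
  moreover have "(\<Prod>i<k. real m - real i) > 0" using posi by (intro prod_pos) auto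
  ultimately show ?thesis using pos unfolding c_def[symmetric] by simp
qed



fun signs :: "nat list \<Rightarrow> int list" where
  "signs [] = []"
| "signs (a # xs) = replicate a 1 @ map uminus (signs xs)"

lemma length_signs: "length (signs xs) = sum_list xs"
  by (induction xs) auto

lemma set_signs: "set (signs xs) \<subseteq> {-1, 1}"
  by (induction xs) auto

lemma sum_list_neg: "sum_list (map uminus (xs::int list)) = - sum_list xs"
  using uminus_sum_list_map[of "\<lambda>x. x" xs] by (simp add: o_def)

lemma alt_psum_0: "alt_psum xs 0 = 0" unfolding alt_psum_def by simp

lemma alt_psum_Cons: "alt_psum (a # xs) (Suc j) = int a - alt_psum xs j"
proof -
  have "alt_psum (a # xs) (Suc j) = (\<Sum>i<Suc j. (-1) ^ i * int ((a # xs) ! i))"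
    unfolding alt_psum_def by simp
  also have "\<dots> = int a + (\<Sum>i<j. (-1) ^ Suc i * int ((a # xs) ! Suc i))"
    by (subst sum.lessThan_Suc_shift) simp
  also have "\<dots> = int a - alt_psum xs j"
    unfolding alt_psum_def by (simp add: sum_negf)
  finally show ?thesis .
qed

lemma sum_signs: "sum_list (signs xs) = alt_psum xs (length xs)"
  by (induction xs) (auto simp: alt_psum_0 alt_psum_Cons sum_list_neg sum_list_replicate)

lemma signs_hd: "xs \<noteq> [] \<Longrightarrow> hd xs > 0 \<Longrightarrow> signs xs ! 0 = 1"
  by (cases xs) (auto simp: nth_append)

lemma signs_at: "xs \<noteq> [] \<Longrightarrow> hd xs > 0 \<Longrightarrow> signs (a # xs) ! a = -1"
proof -
  assume "xs \<noteq> []" "hd xs > 0"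
  moreover have "signs xs \<noteq> []" using calculation by (cases xs) auto
  ultimately show ?thesis using signs_hd[of xs] by (simp add: nth_append)
qed

lemma signs_inj: "(\<forall>x\<in>set xs. 0 < x) \<Longrightarrow> (\<forall>x\<in>set ys. 0 < x) \<Longrightarrow> signs xs = signs ys \<Longrightarrow> xs = ys"
proof (induction xs arbitrary: ys)
  case Nil
  then show ?case by (cases ys) auto
next
  case (Cons a xs)
  show ?case
  proof (cases ys)
    case Nil then show ?thesis using Cons by auto
  next
    case (Cons b ys')
    have key: "a = b"
    proof (rule ccontr)
      assume "a \<noteq> b"
      then consider "a < b" | "b < a" by linarith
      then show False
      proof cases
        case 1
        have eqs: "signs (a # xs) = signs (b # ys')" using Cons.prems Cons by simp
        show False
        proof (cases "xs = []")
          case True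
          then have "length (signs (a # xs)) = a" by (simp add: length_signs)
          moreover have "length (signs (b # ys')) \<ge> b" by (simp add: length_signs)
          moreover have "length (signs (a # xs)) = length (signs (b # ys'))" using eqs by (rule arg_cong)
          ultimately show False using 1 by linarith
        next
          case False
          then have "hd xs > 0" using Cons.prems by (cases xs) auto
          then have "signs (a # xs) ! a = -1" using signs_at False by blast
          moreover have "signs (b # ys') ! a = 1" using 1 by (simp add: nth_append)
          ultimately show False using eqs by simp
        qed
      next
        case 2
        have eqs: "signs (a # xs) = signs (b # ys')" using Cons.prems Cons by simp
        show False
        proof (cases "ys' = []")
          case True
          then have "length (signs (b # ys')) = b" by (simp add: length_signs)
          moreover have "length (signs (a # xs)) \<ge> a" by (simp add: length_signs)
          moreover have "length (signs (a # xs)) = length (signs (b # ys'))" using eqs by (rule arg_cong)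
          ultimately show False using 2 by linarith
        next
          case False
          then have "hd ys' > 0" using Cons.prems Cons by (cases ys') auto
          then have "signs (b # ys') ! b = -1" using signs_at False by blast
          moreover have "signs (a # xs) ! b = 1" using 2 by (simp add: nth_append)
          ultimately show False using eqs by simp
        qed
      qed
    qed
    then have "signs xs = signs ys'" using Cons.prems Cons
      by (simp add: map_eq_conv)
    then have "xs = ys'" using Cons.IH[of ys'] Cons.prems Cons by simp
    then show ?thesis using key Cons by simp
  qed
qed

lemma take_signs_between:
  "p \<le> sum_list xs \<Longrightarrow> sum_list (take p (signs xs)) = 0 \<or>
    (\<exists>j<length xs. min (alt_psum xs j) (alt_psum xs (Suc j)) \<le> sum_list (take p (signs xs)) \<and>
                    sum_list (take p (signs xs)) \<le> max (alt_psum xs j) (alt_psum xs (Suc j)))"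
proof (induction xs arbitrary: p)
  case Nil then show ?case by simp
next
  case (Cons a xs)
  show ?case
  proof (cases "p \<le> a")
    case True
    then have "sum_list (take p (signs (a # xs))) = int p" by (simp add: sum_list_replicate)
    moreover have "alt_psum (a # xs) 0 = 0" "alt_psum (a # xs) 1 = int a"
      using alt_psum_0 alt_psum_Cons[of a xs 0] by (auto simp: alt_psum_0)
    ultimately show ?thesis using True by (intro disjI2 exI[of _ 0]) auto
  next
    case False
    then have eq: "sum_list (take p (signs (a # xs))) = int a - sum_list (take (p - a) (signs xs))"
      by (simp add: take_map sum_list_neg sum_list_replicate)
    have "p - a \<le> sum_list xs" using Cons.prems by simp
    from Cons.IH[OF this] show ?thesis
    proof
      assume "sum_list (take (p - a) (signs xs)) = 0"
      then have "sum_list (take p (signs (a # xs))) = alt_psum (a # xs) 1"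
        using eq alt_psum_Cons[of a xs 0] by (simp add: alt_psum_0)
      then show ?thesis using alt_psum_0[of "a # xs"] by (intro disjI2 exI[of _ 0]) auto
    next
      assume "\<exists>j<length xs. min (alt_psum xs j) (alt_psum xs (Suc j)) \<le> sum_list (take (p - a) (signs xs)) \<and>
                    sum_list (take (p - a) (signs xs)) \<le> max (alt_psum xs j) (alt_psum xs (Suc j))"
      then obtain j where j: "j < length xs" "min (alt_psum xs j) (alt_psum xs (Suc j)) \<le> sum_list (take (p - a) (signs xs))"
        "sum_list (take (p - a) (signs xs)) \<le> max (alt_psum xs j) (alt_psum xs (Suc j))" by blast
      show ?thesis
        using j eq alt_psum_Cons[of a xs j] alt_psum_Cons[of a xs "Suc j"]
        by (intro disjI2 exI[of _ "Suc j"]) auto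
    qed
  qed
qed

lemma dev_prefix_bound:
  assumes "is_dev_set k \<delta> xs" "p \<le> k"
  shows "\<bar>sum_list (take p (signs xs))\<bar> \<le> int \<delta>"
proof -
  have sk: "sum_list xs = k" using assms unfolding is_dev_set_def by simp
  have b: "\<bar>alt_psum xs j\<bar> \<le> int \<delta>" if "j \<le> length xs" for j
  proof (cases "j = 0")
    case True then show ?thesis by (simp add: alt_psum_0)
  next
    case False then show ?thesis using assms that unfolding is_dev_set_def by auto
  qed
  have "p \<le> sum_list xs" using sk assms by simp
  from take_signs_between[OF this] show ?thesis
  proof
    assume "\<exists>j<length xs. min (alt_psum xs j) (alt_psum xs (Suc j)) \<le> sum_list (take p (signs xs)) \<and>
                    sum_list (take p (signs xs)) \<le> max (alt_psum xs j) (alt_psum xs (Suc j))"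
    then obtain j where j: "j < length xs" "min (alt_psum xs j) (alt_psum xs (Suc j)) \<le> sum_list (take p (signs xs))"
      "sum_list (take p (signs xs)) \<le> max (alt_psum xs j) (alt_psum xs (Suc j))" by blast
    have "\<bar>alt_psum xs j\<bar> \<le> int \<delta>" "\<bar>alt_psum xs (Suc j)\<bar> \<le> int \<delta>" using b j by auto
    then show ?thesis using j by linarith
  qed simp
qed



definition Tsum :: "nat set \<Rightarrow> int list \<Rightarrow> int" where
  "Tsum B e = (\<Sum>i<length e. e ! i * int (sorted_list_of_set B ! i))"

lemma img_nth_iff: assumes "distinct bs" "i < length bs" "S \<subseteq> {..<length bs}"
  shows "(bs ! i \<in> (\<lambda>j. bs ! j) ` S) \<longleftrightarrow> i \<in> S"
  using assms nth_eq_iff_index_eq by fastforce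

lemma split_sum_pm:
  fixes e :: "int list" and f :: "nat \<Rightarrow> int"
  assumes "set e \<subseteq> {-1, 1}"
  shows "(\<Sum>i<length e. e ! i * f i) =
         (\<Sum>i\<in>{i. i < length e \<and> e ! i = 1}. f i) - (\<Sum>i\<in>{i. i < length e \<and> e ! i = -1}. f i)"
proof -
  let ?P = "{i. i < length e \<and> e ! i = 1}" and ?N = "{i. i < length e \<and> e ! i = -1}"
  have u: "{..<length e} = ?P \<union> ?N" using assms nth_mem by fastforce
  have d: "?P \<inter> ?N = {}" by auto
  have "(\<Sum>i<length e. e ! i * f i) = (\<Sum>i\<in>?P. e ! i * f i) + (\<Sum>i\<in>?N. e ! i * f i)"
    by (subst u, rule sum.union_disjoint) (use d in auto)
  also have "(\<Sum>i\<in>?P. e ! i * f i) = (\<Sum>i\<in>?P. f i)" by (rule sum.cong) auto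
  also have "(\<Sum>i\<in>?N. e ! i * f i) = - (\<Sum>i\<in>?N. f i)" by (simp add: sum_negf[symmetric])
  finally show ?thesis by simp
qed

lemma card_pm:
  fixes e :: "int list"
  assumes "set e \<subseteq> {-1, 1}"
  shows "card {i. i < length e \<and> e ! i = 1} + card {i. i < length e \<and> e ! i = -1} = length e"
    "sum_list e = int (card {i. i < length e \<and> e ! i = 1}) - int (card {i. i < length e \<and> e ! i = -1})"
proof -
  let ?P = "{i. i < length e \<and> e ! i = 1}" and ?N = "{i. i < length e \<and> e ! i = -1}"
  have u: "{..<length e} = ?P \<union> ?N" using assms nth_mem by fastforce
  have d: "?P \<inter> ?N = {}" by auto
  have "card ({..<length e}) = card ?P + card ?N"
    by (subst u, rule card_Un_disjoint) (use d in auto)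
  then show "card ?P + card ?N = length e" by simp
  have "sum_list e = (\<Sum>i<length e. e ! i * 1)" by (simp add: sum_list_sum_nth atLeast0LessThan)
  also have "\<dots> = (\<Sum>i\<in>?P. 1) - (\<Sum>i\<in>?N. 1)" by (rule split_sum_pm[OF assms])
  finally show "sum_list e = int (card ?P) - int (card ?N)" by simp
qed

lemma set_img_nth: "set xs = (\<lambda>i. xs ! i) ` {..<length xs}"
  by (auto simp: set_conv_nth)

lemma T_inj:
  assumes bk: "is_Bk k A" and sub: "B1 \<subseteq> A" "B2 \<subseteq> A" and cB: "card B1 = k" "card B2 = k"
    and le: "length e1 = k" "length e2 = k" and se: "set e1 \<subseteq> {-1, 1}" "set e2 \<subseteq> {-1, 1}"
    and ss: "sum_list e1 = sum_list e2" and T: "Tsum B1 e1 = Tsum B2 e2"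
  shows "B1 = B2 \<and> e1 = e2"
proof -
  have finA: "finite A" using bk unfolding is_Bk_def by simp
  have fin: "finite B1" "finite B2" using sub finA finite_subset by auto
  define bs1 where "bs1 = sorted_list_of_set B1"
  define bs2 where "bs2 = sorted_list_of_set B2"
  have lb: "length bs1 = k" "length bs2 = k" using cB fin unfolding bs1_def bs2_def by auto
  have db: "distinct bs1" "distinct bs2" unfolding bs1_def bs2_def by auto
  have sb: "set bs1 = B1" "set bs2 = B2" using fin unfolding bs1_def bs2_def by auto
  define Sp1 where "Sp1 = {i. i < length e1 \<and> e1 ! i = 1}"
  define Sn1 where "Sn1 = {i. i < length e1 \<and> e1 ! i = -1}"
  define Sp2 where "Sp2 = {i. i < length e2 \<and> e2 ! i = 1}"
  define Sn2 where "Sn2 = {i. i < length e2 \<and> e2 ! i = -1}"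
  have finS: "finite Sp1" "finite Sn1" "finite Sp2" "finite Sn2"
    unfolding Sp1_def Sn1_def Sp2_def Sn2_def by auto
  have subS: "Sp1 \<subseteq> {..<k}" "Sn1 \<subseteq> {..<k}" "Sp2 \<subseteq> {..<k}" "Sn2 \<subseteq> {..<k}"
    unfolding Sp1_def Sn1_def Sp2_def Sn2_def using le by auto
  have un1: "Sp1 \<union> Sn1 = {..<k}"
  proof (rule equalityI)
    show "Sp1 \<union> Sn1 \<subseteq> {..<k}" using subS by blast
    show "{..<k} \<subseteq> Sp1 \<union> Sn1"
    proof
      fix i assume "i \<in> {..<k}"
      then have "i < length e1" using le by simp
      then have "e1 ! i \<in> {-1, 1}" using se(1) nth_mem by blast
      then show "i \<in> Sp1 \<union> Sn1" unfolding Sp1_def Sn1_def using \<open>i < length e1\<close> by auto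
    qed
  qed
  have un2: "Sp2 \<union> Sn2 = {..<k}"
  proof (rule equalityI)
    show "Sp2 \<union> Sn2 \<subseteq> {..<k}" using subS by blast
    show "{..<k} \<subseteq> Sp2 \<union> Sn2"
    proof
      fix i assume "i \<in> {..<k}"
      then have "i < length e2" using le by simp
      then have "e2 ! i \<in> {-1, 1}" using se(2) nth_mem by blast
      then show "i \<in> Sp2 \<union> Sn2" unfolding Sp2_def Sn2_def using \<open>i < length e2\<close> by auto
    qed
  qed
  note un = un1 un2
  have dj: "Sp1 \<inter> Sn1 = {}" "Sp2 \<inter> Sn2 = {}" unfolding Sp1_def Sn1_def Sp2_def Sn2_def by auto
  have c1: "card Sp1 + card Sn1 = k" "sum_list e1 = int (card Sp1) - int (card Sn1)"
    using card_pm[OF se(1)] le unfolding Sp1_def Sn1_def by auto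
  have c2: "card Sp2 + card Sn2 = k" "sum_list e2 = int (card Sp2) - int (card Sn2)"
    using card_pm[OF se(2)] le unfolding Sp2_def Sn2_def by auto
  have cc: "card Sp1 = card Sp2" "card Sn1 = card Sn2" using c1 c2 ss by linarith+
  define f1 where "f1 = (\<lambda>i. bs1 ! i)"
  define f2 where "f2 = (\<lambda>i. bs2 ! i)"
  have T1: "Tsum B1 e1 = int (\<Sum>i\<in>Sp1. f1 i) - int (\<Sum>i\<in>Sn1. f1 i)"
    unfolding Tsum_def using split_sum_pm[OF se(1), of "\<lambda>i. int (bs1 ! i)"]
    unfolding Sp1_def Sn1_def f1_def bs1_def by simp
  have T2: "Tsum B2 e2 = int (\<Sum>i\<in>Sp2. f2 i) - int (\<Sum>i\<in>Sn2. f2 i)"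
    unfolding Tsum_def using split_sum_pm[OF se(2), of "\<lambda>i. int (bs2 ! i)"]
    unfolding Sp2_def Sn2_def f2_def bs2_def by simp
  define M where "M = image_mset f1 (mset_set Sp1) + image_mset f2 (mset_set Sn2)"
  define N where "N = image_mset f2 (mset_set Sp2) + image_mset f1 (mset_set Sn1)"
  have sM: "set_mset M = f1 ` Sp1 \<union> f2 ` Sn2" unfolding M_def using finS by auto
  have sN: "set_mset N = f2 ` Sp2 \<union> f1 ` Sn1" unfolding N_def using finS by auto
  have imgA1: "f1 ` S \<subseteq> A" if "S \<subseteq> {..<k}" for S
  proof
    fix x assume "x \<in> f1 ` S"
    then obtain i where "i \<in> S" "x = bs1 ! i" unfolding f1_def by blast
    then have "x \<in> set bs1" using that lb by (auto simp: nth_mem)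
    then show "x \<in> A" using sb sub by blast
  qed
  have imgA2: "f2 ` S \<subseteq> A" if "S \<subseteq> {..<k}" for S
  proof
    fix x assume "x \<in> f2 ` S"
    then obtain i where "i \<in> S" "x = bs2 ! i" unfolding f2_def by blast
    then have "x \<in> set bs2" using that lb by (auto simp: nth_mem)
    then show "x \<in> A" using sb sub by blast
  qed
  have "set_mset M \<subseteq> A" unfolding sM using imgA1 imgA2 subS by blast
  moreover have "set_mset N \<subseteq> A" unfolding sN using imgA1 imgA2 subS by blast
  moreover have "size M = k" unfolding M_def using c1 cc finS by simp
  moreover have "size N = k" unfolding N_def using c1 cc finS by simp
  moreover have "sum_mset M = sum_mset N"
  proof -
    have "sum_mset M = (\<Sum>i\<in>Sp1. f1 i) + (\<Sum>i\<in>Sn2. f2 i)"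
      unfolding M_def by (simp add: sum_unfold_sum_mset)
    moreover have "sum_mset N = (\<Sum>i\<in>Sp2. f2 i) + (\<Sum>i\<in>Sn1. f1 i)"
      unfolding N_def by (simp add: sum_unfold_sum_mset)
    ultimately show ?thesis using T T1 T2 by linarith
  qed
  ultimately have MN: "M = N" using bk unfolding is_Bk_def by blast
  have inj1: "f1 i \<in> f1 ` S \<longleftrightarrow> i \<in> S" if "i < k" "S \<subseteq> {..<k}" for i S
    unfolding f1_def using img_nth_iff[OF db(1)] that lb by simp
  have inj2: "f2 i \<in> f2 ` S \<longleftrightarrow> i \<in> S" if "i < k" "S \<subseteq> {..<k}" for i S
    unfolding f2_def using img_nth_iff[OF db(2)] that lb by simp
  have disj1: "f1 ` Sp1 \<inter> f1 ` Sn1 = {}"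
  proof -
    { fix x assume "x \<in> f1 ` Sp1" "x \<in> f1 ` Sn1"
      then obtain i where i: "i \<in> Sp1" "x = f1 i" by blast
      then have "i \<in> Sn1" using inj1[of i Sn1] subS \<open>x \<in> f1 ` Sn1\<close> by auto
      then have False using i dj by auto }
    then show ?thesis by blast
  qed
  have disj2: "f2 ` Sp2 \<inter> f2 ` Sn2 = {}"
  proof -
    { fix x assume "x \<in> f2 ` Sp2" "x \<in> f2 ` Sn2"
      then obtain i where i: "i \<in> Sp2" "x = f2 i" by blast
      then have "i \<in> Sn2" using inj2[of i Sn2] subS \<open>x \<in> f2 ` Sn2\<close> by auto
      then have False using i dj by auto }
    then show ?thesis by blast
  qed
  have SS: "f1 ` Sp1 \<union> f2 ` Sn2 = f2 ` Sp2 \<union> f1 ` Sn1" using sM sN MN by simp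
  have eqP: "f1 ` Sp1 = f2 ` Sp2"
  proof (rule equalityI; rule subsetI)
    fix x assume x: "x \<in> f1 ` Sp1"
    then have "x \<in> f2 ` Sp2 \<union> f1 ` Sn1" using SS by blast
    moreover have "x \<notin> f1 ` Sn1" using x disj1 by blast
    ultimately show "x \<in> f2 ` Sp2" by blast
  next
    fix x assume x: "x \<in> f2 ` Sp2"
    then have "x \<in> f1 ` Sp1 \<union> f2 ` Sn2" using SS by blast
    moreover have "x \<notin> f2 ` Sn2" using x disj2 by blast
    ultimately show "x \<in> f1 ` Sp1" by blast
  qed
  have eqN: "f1 ` Sn1 = f2 ` Sn2"
  proof (rule equalityI; rule subsetI)
    fix x assume x: "x \<in> f1 ` Sn1"
    then have "x \<in> f1 ` Sp1 \<union> f2 ` Sn2" using SS by blast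
    moreover have "x \<notin> f1 ` Sp1" using x disj1 by blast
    ultimately show "x \<in> f2 ` Sn2" by blast
  next
    fix x assume x: "x \<in> f2 ` Sn2"
    then have "x \<in> f2 ` Sp2 \<union> f1 ` Sn1" using SS by blast
    moreover have "x \<notin> f2 ` Sp2" using x disj2 by blast
    ultimately show "x \<in> f1 ` Sn1" by blast
  qed
  have "B1 = f1 ` (Sp1 \<union> Sn1)"
    unfolding un f1_def using sb(1) lb(1) set_img_nth[of bs1] by simp
  moreover have "B2 = f2 ` (Sp2 \<union> Sn2)"
    unfolding un f2_def using sb(2) lb(2) set_img_nth[of bs2] by simp
  ultimately have BB: "B1 = B2" using eqP eqN by (simp add: image_Un)
  have bsq: "bs1 = bs2" unfolding bs1_def bs2_def using BB by simp
  have fq: "f1 = f2" unfolding f1_def f2_def using bsq by simp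
  have "e1 ! i = e2 ! i" if i: "i < k" for i
  proof -
    have "f1 ` Sp1 = f1 ` Sp2" using eqP fq by simp
    then have "i \<in> Sp1 \<longleftrightarrow> i \<in> Sp2"
      using inj1[OF i subS(1)] inj1[OF i subS(3)] by blast
    moreover have "e1 ! i \<in> {-1, 1}"
    proof -
      have "i < length e1" using le i by simp
      then have "e1 ! i \<in> set e1" by (rule nth_mem)
      then show ?thesis by (rule subsetD[OF se(1)])
    qed
    moreover have "e2 ! i \<in> {-1, 1}"
    proof -
      have "i < length e2" using le i by simp
      then have "e2 ! i \<in> set e2" by (rule nth_mem)
      then show ?thesis by (rule subsetD[OF se(2)])
    qed
    moreover have "i \<in> Sp1 \<longleftrightarrow> e1 ! i = 1" unfolding Sp1_def using le i by simp
    moreover have "i \<in> Sp2 \<longleftrightarrow> e2 ! i = 1" unfolding Sp2_def using le i by simp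
    ultimately show ?thesis by (smt (verit) insertE singletonD)
  qed
  then have "e1 = e2" using le by (intro nth_equalityI) auto
  with BB show ?thesis by simp
qed



lemma abel:
  fixes e b :: "nat \<Rightarrow> int"
  shows "(\<Sum>i<Suc n. e i * b i) = (\<Sum>i<Suc n. e i) * b n - (\<Sum>j<n. (\<Sum>i<Suc j. e i) * (b (Suc j) - b j))"
proof (induction n)
  case 0 then show ?case by simp
next
  case (Suc n)
  have "(\<Sum>i<Suc (Suc n). e i * b i) = (\<Sum>i<Suc n. e i * b i) + e (Suc n) * b (Suc n)" by simp
  also have "\<dots> = (\<Sum>i<Suc n. e i) * b n - (\<Sum>j<n. (\<Sum>i<Suc j. e i) * (b (Suc j) - b j)) + e (Suc n) * b (Suc n)"
    using Suc by simp
  also have "\<dots> = (\<Sum>i<Suc (Suc n). e i) * b (Suc n) - (\<Sum>j<Suc n. (\<Sum>i<Suc j. e i) * (b (Suc j) - b j))"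
    by (simp add: algebra_simps)
  finally show ?case .
qed

lemma sum_take_nth: "j \<le> length xs \<Longrightarrow> sum_list (take j xs) = (\<Sum>i<j. xs ! i)"
  by (simp add: sum_list_sum_nth atLeast0LessThan min_absorb2)

lemma telescope_int:
  fixes b :: "nat \<Rightarrow> int"
  shows "(\<Sum>j<n. b (Suc j) - b j) = b n - b 0"
  by (induction n) auto

locale rng =
  fixes B :: "nat set" and e :: "int list" and k n \<delta> :: nat
  assumes fin: "finite B" and sub: "B \<subseteq> {0..n}" and cB: "card B = k" and k1: "k \<ge> 1"
    and le: "length e = k" and se: "set e \<subseteq> {-1, 1}"
    and pre: "\<And>p. p \<le> k \<Longrightarrow> \<bar>sum_list (take p e)\<bar> \<le> int \<delta>"
begin

definition bs where "bs = sorted_list_of_set B"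
definition bb where "bb i = int (bs ! i)"
definition P where "P j = (\<Sum>i<j. e ! i)"
definition g where "g j = bb (Suc j) - bb j"

lemma lbs: "length bs = k" using fin cB unfolding bs_def by simp

lemma bb_range: "i < k \<Longrightarrow> 0 \<le> bb i \<and> bb i \<le> int n"
proof -
  assume i: "i < k"
  then have "bs ! i \<in> set bs" using lbs by simp
  then have "bs ! i \<in> B" using fin unfolding bs_def by simp
  then show ?thesis using sub unfolding bb_def by auto
qed

lemma g_pos: "j < k - 1 \<Longrightarrow> g j \<ge> 1"
proof -
  assume j: "j < k - 1"
  have "sorted_wrt (<) bs" unfolding bs_def by simp
  then have "bs ! j < bs ! Suc j" using j lbs by (simp add: sorted_wrt_iff_nth_less)
  then show ?thesis unfolding g_def bb_def by simp
qed

lemma P_bound: "j \<le> k \<Longrightarrow> \<bar>P j\<bar> \<le> int \<delta>"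
  using pre[of j] sum_take_nth[of j e] le unfolding P_def by simp

lemma T_abel: "Tsum B e = P k * bb (k - 1) - (\<Sum>j<k - 1. P (Suc j) * g j)"
proof -
  have k: "Suc (k - 1) = k" using k1 by simp
  have "Tsum B e = (\<Sum>i<Suc (k - 1). e ! i * bb i)"
    unfolding Tsum_def bb_def bs_def using le k by simp
  also have "\<dots> = P k * bb (k - 1) - (\<Sum>j<k - 1. P (Suc j) * g j)"
    unfolding P_def g_def using abel[of "\<lambda>i. e ! i" bb "k - 1"] k by simp
  finally show ?thesis .
qed

lemma sum_g: "(\<Sum>j<k - 1. g j) = bb (k - 1) - bb 0"
  unfolding g_def by (rule telescope_int)

lemma wsum_bound: "\<bar>\<Sum>j<k - 1. P (Suc j) * g j\<bar> \<le> int \<delta> * (bb (k - 1) - bb 0)"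
proof -
  have "(\<Sum>j<k - 1. P (Suc j) * g j) \<le> (\<Sum>j<k - 1. int \<delta> * g j)"
  proof (rule sum_mono)
    fix j assume j: "j \<in> {..<k - 1}"
    then have "Suc j \<le> k" by auto
    with j have "P (Suc j) \<le> int \<delta>" "g j \<ge> 0" using P_bound[of "Suc j"] g_pos[of j] by (auto simp: abs_le_iff)
    then show "P (Suc j) * g j \<le> int \<delta> * g j" by (simp add: mult_right_mono)
  qed
  moreover have "(\<Sum>j<k - 1. - int \<delta> * g j) \<le> (\<Sum>j<k - 1. P (Suc j) * g j)"
  proof (rule sum_mono)
    fix j assume j: "j \<in> {..<k - 1}"
    then have "Suc j \<le> k" by auto
    with j have "- int \<delta> \<le> P (Suc j)" "g j \<ge> 0" using P_bound[of "Suc j"] g_pos[of j] by (auto simp: abs_le_iff)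
    then show "- int \<delta> * g j \<le> P (Suc j) * g j" using mult_right_mono[of "- int \<delta>" "P (Suc j)" "g j"] by simp
  qed
  moreover have "(\<Sum>j<k - 1. - int \<delta> * g j) = - (int \<delta> * (bb (k - 1) - bb 0))"
    using sum_g by (simp add: sum_distrib_left[symmetric] sum_negf)
  moreover have "(\<Sum>j<k - 1. int \<delta> * g j) = int \<delta> * (bb (k - 1) - bb 0)"
    using sum_g by (simp add: sum_distrib_left[symmetric])
  ultimately show ?thesis by (simp add: abs_le_iff)
qed

lemma even_range: "sum_list e = 0 \<Longrightarrow> \<bar>Tsum B e\<bar> \<le> int \<delta> * int n"
proof -
  assume s: "sum_list e = 0"
  have "P k = 0" using s sum_take_nth[of k e] le unfolding P_def by simp
  then have "Tsum B e = - (\<Sum>j<k - 1. P (Suc j) * g j)" using T_abel by simp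
  moreover have "int \<delta> * (bb (k - 1) - bb 0) \<le> int \<delta> * int n"
    using bb_range[of "k - 1"] bb_range[of 0] k1 by (intro mult_left_mono) auto
  ultimately show ?thesis using wsum_bound by simp
qed

lemma P_Suc: "j < k \<Longrightarrow> P (Suc j) = P j + e ! j" unfolding P_def by simp

lemma e_pm: "j < k \<Longrightarrow> e ! j = 1 \<or> e ! j = -1"
proof -
  assume "j < k"
  then have "e ! j \<in> set e" using le by simp
  then have "e ! j \<in> {-1, 1}" by (rule subsetD[OF se])
  then show ?thesis by auto
qed

lemma odd_range3:
  assumes s: "sum_list e = 1" and k3: "k \<ge> 3" and d1: "\<delta> \<ge> 1"
  shows "(1 - int \<delta>) * int n + 1 \<le> Tsum B e \<and> Tsum B e \<le> (1 + int \<delta>) * int n - 1"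
proof -
  define W where "W = (\<Sum>j<k - 1. P (Suc j) * g j)"
  have Pk: "P k = 1" using s sum_take_nth[of k e] le unfolding P_def by simp
  have T: "Tsum B e = bb (k - 1) - W" using T_abel Pk unfolding W_def by simp
  have P0: "P 0 = 0" unfolding P_def by simp
  have P1: "P 1 = e ! 0" using P_Suc[of 0] P0 k3 by simp
  have P2: "P 2 = e ! 0 + e ! 1" using P_Suc[of 1] P1 k3 by (simp add: numeral_2_eq_2)
  have b1: "\<bar>P 1\<bar> \<le> int \<delta>" "\<bar>P 2\<bar> \<le> int \<delta>" using P_bound k3 by auto
  have e1: "e ! 1 = 1 \<or> e ! 1 = -1" using e_pm k3 by simp
  have fin: "finite {..<k - 1}" by simp
  have up: "\<exists>j0<k - 1. P (Suc j0) \<ge> 1 - int \<delta>"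
  proof (cases "P 1 \<ge> 1 - int \<delta>")
    case True then show ?thesis using k3 by (intro exI[of _ 0]) auto
  next
    case False
    then have "P 2 \<ge> 1 - int \<delta>" using b1 e1 P1 P2 by (auto simp: abs_le_iff)
    then show ?thesis using k3 by (intro exI[of _ 1]) (auto simp: numeral_2_eq_2)
  qed
  have dn: "\<exists>j1<k - 1. P (Suc j1) \<le> int \<delta> - 1"
  proof (cases "P 1 \<le> int \<delta> - 1")
    case True then show ?thesis using k3 by (intro exI[of _ 0]) auto
  next
    case False
    then have "P 2 \<le> int \<delta> - 1" using b1 e1 P1 P2 by (auto simp: abs_le_iff)
    then show ?thesis using k3 by (intro exI[of _ 1]) (auto simp: numeral_2_eq_2)
  qed
  have gnn: "\<And>j. j \<in> {..<k - 1} \<Longrightarrow> g j \<ge> 1" using g_pos by auto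
  have Pb: "\<And>j. j \<in> {..<k - 1} \<Longrightarrow> \<bar>P (Suc j)\<bar> \<le> int \<delta>"
  proof -
    fix j assume "j \<in> {..<k - 1}"
    then have "Suc j \<le> k" by auto
    then show "\<bar>P (Suc j)\<bar> \<le> int \<delta>" by (rule P_bound)
  qed
  have W1: "W + int \<delta> * (bb (k - 1) - bb 0) \<ge> 1"
  proof -
    obtain j0 where j0: "j0 < k - 1" "P (Suc j0) \<ge> 1 - int \<delta>" using up by blast
    have a: "1 \<le> P (Suc j0) + int \<delta>" using j0 by simp
    have "1 * 1 \<le> (P (Suc j0) + int \<delta>) * g j0"
      using j0 gnn[of j0] by (intro mult_mono[OF a]) auto
    also have "\<dots> \<le> (\<Sum>j<k - 1. (P (Suc j) + int \<delta>) * g j)"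
    proof (rule member_le_sum)
      show "j0 \<in> {..<k - 1}" using j0 by simp
      fix x assume "x \<in> {..<k - 1} - {j0}"
      then have "x \<in> {..<k - 1}" by simp
      then have "P (Suc x) + int \<delta> \<ge> 0" "g x \<ge> 0" using Pb gnn by (force simp: abs_le_iff)+
      then show "0 \<le> (P (Suc x) + int \<delta>) * g x" by simp
    qed simp
    also have "\<dots> = W + int \<delta> * (bb (k - 1) - bb 0)"
      unfolding W_def sum_g[symmetric] by (simp add: algebra_simps sum.distrib sum_distrib_left)
    finally show ?thesis by simp
  qed
  have W2: "int \<delta> * (bb (k - 1) - bb 0) - W \<ge> 1"
  proof -
    obtain j1 where j1: "j1 < k - 1" "P (Suc j1) \<le> int \<delta> - 1" using dn by blast
    have a: "1 \<le> int \<delta> - P (Suc j1)" using j1 by simp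
    have "1 * 1 \<le> (int \<delta> - P (Suc j1)) * g j1"
      using j1 gnn[of j1] by (intro mult_mono[OF a]) auto
    also have "\<dots> \<le> (\<Sum>j<k - 1. (int \<delta> - P (Suc j)) * g j)"
    proof (rule member_le_sum)
      show "j1 \<in> {..<k - 1}" using j1 by simp
      fix x assume "x \<in> {..<k - 1} - {j1}"
      then have "x \<in> {..<k - 1}" by simp
      then have "int \<delta> - P (Suc x) \<ge> 0" "g x \<ge> 0" using Pb gnn by (force simp: abs_le_iff)+
      then show "0 \<le> (int \<delta> - P (Suc x)) * g x" by simp
    qed simp
    also have "\<dots> = int \<delta> * (bb (k - 1) - bb 0) - W"
      unfolding W_def sum_g[symmetric] by (simp add: algebra_simps sum_subtractf sum_distrib_left)
    finally show ?thesis by simp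
  qed
  have r1: "0 \<le> bb 0" "bb (k - 1) \<le> int n" using bb_range[of 0] bb_range[of "k - 1"] k3 by auto
  have "int \<delta> * (bb (k - 1) - bb 0) \<le> int \<delta> * bb (k - 1)" using r1 by (simp add: mult_left_mono)
  moreover have "(1 - int \<delta>) * int n \<le> (1 - int \<delta>) * bb (k - 1)"
    using r1 d1 by (intro mult_left_mono_neg) auto
  moreover have "(1 + int \<delta>) * bb (k - 1) \<le> (1 + int \<delta>) * int n"
    using r1 by (intro mult_left_mono) auto
  moreover have "int \<delta> * (bb (k - 1) - bb 0) \<ge> 0" using bb_range[of 0] bb_range[of "k - 1"] k3 d1
    by (smt (verit) W1 W2)
  ultimately show ?thesis using T W1 W2 by (simp add: algebra_simps)
qed

lemma odd_range1:
  assumes s: "sum_list e = 1" and k: "k = 1"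
  shows "0 \<le> Tsum B e \<and> Tsum B e \<le> int n"
proof -
  have "e = [e ! 0]" using le k by (cases e) auto
  then have "e ! 0 = 1" using s by (metis sum_list.Cons sum_list.Nil add.right_neutral)
  then have "Tsum B e = bb 0" unfolding Tsum_def bb_def bs_def using le k by simp
  then show ?thesis using bb_range[of 0] k by simp
qed

end



definition tot :: "nat list \<Rightarrow> int" where "tot xs = alt_psum xs (length xs)"

lemma parity_pm: "set (l::int list) \<subseteq> {-1, 1} \<Longrightarrow> even (sum_list l + int (length l))"
proof (induction l)
  case Nil then show ?case by simp
next
  case (Cons a l)
  then have "a = 1 \<or> a = -1" "even (sum_list l + int (length l))" by auto
  then show ?case by (auto simp: algebra_simps)
qed

lemma dev_basic:
  assumes "is_dev_set k \<delta> xs" "k \<ge> 1"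
  shows "length (signs xs) = k" "set (signs xs) \<subseteq> {-1, 1}" "sum_list (signs xs) = tot xs"
    "\<bar>tot xs\<bar> \<le> 1" "signs xs ! 0 = 1" "\<forall>x\<in>set xs. 0 < x"
    "even k \<Longrightarrow> tot xs = 0" "odd k \<Longrightarrow> tot xs = 1 \<or> tot xs = -1"
proof -
  show l: "length (signs xs) = k" using assms unfolding is_dev_set_def by (simp add: length_signs)
  show s: "set (signs xs) \<subseteq> {-1, 1}" by (rule set_signs)
  show t: "sum_list (signs xs) = tot xs" unfolding tot_def by (rule sum_signs)
  show a: "\<bar>tot xs\<bar> \<le> 1" using assms unfolding is_dev_set_def tot_def by simp
  show p: "\<forall>x\<in>set xs. 0 < x" using assms unfolding is_dev_set_def by simp
  have "xs \<noteq> []" using assms unfolding is_dev_set_def by auto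
  moreover then have "hd xs > 0" using p by (cases xs) auto
  ultimately show "signs xs ! 0 = 1" by (rule signs_hd)
  have ev: "even (tot xs + int k)" using parity_pm[OF s] l t by simp
  show "even k \<Longrightarrow> tot xs = 0" using ev a by (auto simp: abs_le_iff)
  show "odd k \<Longrightarrow> tot xs = 1 \<or> tot xs = -1"
  proof -
    assume "odd k"
    then have "odd (tot xs)" using ev by simp
    moreover have "tot xs = -1 \<or> tot xs = 0 \<or> tot xs = 1" using a by (simp add: abs_le_iff) presburger
    ultimately show ?thesis by auto
  qed
qed

lemma map_sigma_props:
  assumes "is_dev_set k \<delta> xs" "k \<ge> 1" "\<sigma> = 1 \<or> \<sigma> = (-1::int)"
  defines "e \<equiv> map ((*) \<sigma>) (signs xs)"
  shows "length e = k" "set e \<subseteq> {-1, 1}" "sum_list e = \<sigma> * tot xs"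
    "\<And>p. p \<le> k \<Longrightarrow> \<bar>sum_list (take p e)\<bar> \<le> int \<delta>" "e ! 0 = \<sigma>"
proof -
  note b = dev_basic[OF assms(1,2)]
  show "length e = k" unfolding e_def using b by simp
  show "set e \<subseteq> {-1, 1}" unfolding e_def using b(2) assms(3) by auto
  show "sum_list e = \<sigma> * tot xs" unfolding e_def using b(3) by (simp add: sum_list_const_mult)
  show "e ! 0 = \<sigma>" unfolding e_def using b(1,5) assms(2) by simp
  fix p assume "p \<le> k"
  then have "\<bar>sum_list (take p (signs xs))\<bar> \<le> int \<delta>" using dev_prefix_bound assms(1) by blast
  moreover have "sum_list (take p e) = \<sigma> * sum_list (take p (signs xs))"
    unfolding e_def by (simp add: take_map sum_list_const_mult)
  ultimately show "\<bar>sum_list (take p e)\<bar> \<le> int \<delta>" using assms(3) by (auto simp: abs_mult)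
qed

lemma key_inj:
  assumes "is_dev_set k \<delta> xs1" "is_dev_set k \<delta> xs2" "k \<ge> 1"
    "\<sigma>1 = 1 \<or> \<sigma>1 = (-1::int)" "\<sigma>2 = 1 \<or> \<sigma>2 = (-1::int)"
    "map ((*) \<sigma>1) (signs xs1) = map ((*) \<sigma>2) (signs xs2)"
  shows "\<sigma>1 = \<sigma>2 \<and> xs1 = xs2"
proof -
  have "\<sigma>1 = \<sigma>2" using map_sigma_props(5)[OF assms(1,3,4)] map_sigma_props(5)[OF assms(2,3,5)] assms(6) by simp
  moreover have "\<And>l. map ((*) \<sigma>1) (map ((*) \<sigma>1) l) = l" using assms(4) by (auto simp: map_idI)
  ultimately have "signs xs1 = signs xs2" using assms(6) by metis
  then have "xs1 = xs2" using signs_inj dev_basic(6)[OF assms(1,3)] dev_basic(6)[OF assms(2,3)] by blast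
  with \<open>\<sigma>1 = \<sigma>2\<close> show ?thesis by simp
qed

lemma count_main:
  assumes bk: "is_Bk k A" and sub: "A \<subseteq> {0..n}" and k1: "k \<ge> 1" and d1: "\<delta> \<ge> 1" and n1: "n \<ge> 1"
  shows "(card A choose k) * zeta k \<delta> \<le> (if even k then 1 else 2) * \<delta> * n"
proof -
  have finA: "finite A" using bk unfolding is_Bk_def by simp
  define Bs where "Bs = {B. B \<subseteq> A \<and> card B = k}"
  define Dev where "Dev = {xs. is_dev_set k \<delta> xs}"
  have cBs: "card Bs = card A choose k" unfolding Bs_def using n_subsets[OF finA] by simp
  have cDev: "card Dev = zeta k \<delta>" unfolding Dev_def zeta_def ..
  have rng_ok: "rng B (map ((*) \<sigma>) (signs xs)) k n \<delta>"
    if "B \<in> Bs" "xs \<in> Dev" "\<sigma> = 1 \<or> \<sigma> = (-1::int)" for B xs \<sigma>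
  proof -
    have "B \<subseteq> A" "card B = k" using that unfolding Bs_def by auto
    moreover have "finite B" using \<open>B \<subseteq> A\<close> finA finite_subset by blast
    moreover note mp = map_sigma_props[OF _ k1 that(3), of \<delta> xs]
    ultimately show ?thesis using that(2) sub k1 unfolding Dev_def
      by unfold_locales auto
  qed
  show ?thesis
  proof (cases "even k")
    case True
    define S where "S = Bs \<times> ({1, -1::int} \<times> Dev)"
    define f where "f = (\<lambda>(B, \<sigma>, xs). Tsum B (map ((*) \<sigma>) (signs xs)))"
    have img: "f ` S \<subseteq> {- (int \<delta> * int n) .. int \<delta> * int n}"
    proof
      fix t assume "t \<in> f ` S"
      then obtain B \<sigma> xs where x: "B \<in> Bs" "\<sigma> = 1 \<or> \<sigma> = -1" "xs \<in> Dev" "t = Tsum B (map ((*) \<sigma>) (signs xs))"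
        unfolding S_def f_def by auto
      interpret r: rng B "map ((*) \<sigma>) (signs xs)" k n \<delta> using rng_ok x by blast
      have "sum_list (map ((*) \<sigma>) (signs xs)) = 0"
        using map_sigma_props(3)[OF _ k1 x(2), of \<delta> xs] dev_basic(7)[OF _ k1 True, of \<delta> xs] x(3)
        unfolding Dev_def by simp
      then show "t \<in> {- (int \<delta> * int n) .. int \<delta> * int n}" using r.even_range x(4) by (simp add: abs_le_iff)
    qed
    have inj: "inj_on f S"
    proof (rule inj_onI)
      fix a b assume a: "a \<in> S" and b: "b \<in> S" and fab: "f a = f b"
      obtain B1 \<sigma>1 xs1 where a': "a = (B1, \<sigma>1, xs1)" by (cases a) auto
      obtain B2 \<sigma>2 xs2 where b': "b = (B2, \<sigma>2, xs2)" by (cases b) auto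
      have m1: "B1 \<in> Bs" "\<sigma>1 = 1 \<or> \<sigma>1 = -1" "xs1 \<in> Dev" using a a' unfolding S_def by auto
      have m2: "B2 \<in> Bs" "\<sigma>2 = 1 \<or> \<sigma>2 = -1" "xs2 \<in> Dev" using b b' unfolding S_def by auto
      have d1': "is_dev_set k \<delta> xs1" "is_dev_set k \<delta> xs2" using m1 m2 unfolding Dev_def by auto
      note p1 = map_sigma_props[OF d1'(1) k1 m1(2)]
      note p2 = map_sigma_props[OF d1'(2) k1 m2(2)]
      have "B1 = B2 \<and> map ((*) \<sigma>1) (signs xs1) = map ((*) \<sigma>2) (signs xs2)"
      proof (rule T_inj[OF bk])
        show "B1 \<subseteq> A" "B2 \<subseteq> A" "card B1 = k" "card B2 = k" using m1 m2 unfolding Bs_def by auto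
        show "sum_list (map ((*) \<sigma>1) (signs xs1)) = sum_list (map ((*) \<sigma>2) (signs xs2))"
          using p1(3) p2(3) dev_basic(7)[OF d1'(1) k1 True] dev_basic(7)[OF d1'(2) k1 True] by simp
        show "Tsum B1 (map ((*) \<sigma>1) (signs xs1)) = Tsum B2 (map ((*) \<sigma>2) (signs xs2))"
          using fab a' b' unfolding f_def by simp
      qed (use p1 p2 in auto)
      moreover then have "\<sigma>1 = \<sigma>2 \<and> xs1 = xs2" using key_inj[OF d1' k1 m1(2) m2(2)] by blast
      ultimately show "a = b" using a' b' by simp
    qed
    have "card S \<le> card {- (int \<delta> * int n) .. int \<delta> * int n}"
      by (rule card_inj_on_le[OF inj img]) simp
    also have "\<dots> = 2 * \<delta> * n + 1" by (simp add: nat_add_distrib nat_mult_distrib) 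
    finally have "2 * ((card A choose k) * zeta k \<delta>) \<le> 2 * (\<delta> * n) + 1"
      unfolding S_def card_cartesian_product cBs cDev by (simp add: algebra_simps)
    then have "(card A choose k) * zeta k \<delta> \<le> \<delta> * n" by linarith
    then show ?thesis using True by simp
  next
    case False
    define S where "S = Bs \<times> Dev"
    define f where "f = (\<lambda>(B, xs). Tsum B (map ((*) (tot xs)) (signs xs)))"
    define R where "R = (if k = 1 then {0 .. int n} else {(1 - int \<delta>) * int n + 1 .. (1 + int \<delta>) * int n - 1})"
    have img: "f ` S \<subseteq> R"
    proof
      fix t assume "t \<in> f ` S"
      then obtain B xs where x: "B \<in> Bs" "xs \<in> Dev" "t = Tsum B (map ((*) (tot xs)) (signs xs))"
        unfolding S_def f_def by auto
      have dx: "is_dev_set k \<delta> xs" using x unfolding Dev_def by simp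
      have tt: "tot xs = 1 \<or> tot xs = -1" using dev_basic(8)[OF dx k1 False] .
      interpret r: rng B "map ((*) (tot xs)) (signs xs)" k n \<delta> using rng_ok x tt by blast
      have s1: "sum_list (map ((*) (tot xs)) (signs xs)) = 1"
        using map_sigma_props(3)[OF dx k1 tt] tt by auto
      show "t \<in> R"
      proof (cases "k = 1")
        case True then show ?thesis using r.odd_range1[OF s1] x(3) unfolding R_def by simp
      next
        case False
        then have "k \<ge> 3" using \<open>odd k\<close> k1 by presburger
        then show ?thesis using r.odd_range3[OF s1 _ d1] x(3) False unfolding R_def by simp
      qed
    qed
    have inj: "inj_on f S"
    proof (rule inj_onI)
      fix a b assume a: "a \<in> S" and b: "b \<in> S" and fab: "f a = f b"
      obtain B1 xs1 where a': "a = (B1, xs1)" by (cases a) auto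
      obtain B2 xs2 where b': "b = (B2, xs2)" by (cases b) auto
      have m1: "B1 \<in> Bs" "xs1 \<in> Dev" using a a' unfolding S_def by auto
      have m2: "B2 \<in> Bs" "xs2 \<in> Dev" using b b' unfolding S_def by auto
      have d1': "is_dev_set k \<delta> xs1" "is_dev_set k \<delta> xs2" using m1 m2 unfolding Dev_def by auto
      have t1: "tot xs1 = 1 \<or> tot xs1 = -1" using dev_basic(8)[OF d1'(1) k1 False] .
      have t2: "tot xs2 = 1 \<or> tot xs2 = -1" using dev_basic(8)[OF d1'(2) k1 False] .
      note p1 = map_sigma_props[OF d1'(1) k1 t1]
      note p2 = map_sigma_props[OF d1'(2) k1 t2]
      have "B1 = B2 \<and> map ((*) (tot xs1)) (signs xs1) = map ((*) (tot xs2)) (signs xs2)"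
      proof (rule T_inj[OF bk])
        show "B1 \<subseteq> A" "B2 \<subseteq> A" "card B1 = k" "card B2 = k" using m1 m2 unfolding Bs_def by auto
        show "sum_list (map ((*) (tot xs1)) (signs xs1)) = sum_list (map ((*) (tot xs2)) (signs xs2))"
          using p1(3) p2(3) t1 t2 by auto
        show "Tsum B1 (map ((*) (tot xs1)) (signs xs1)) = Tsum B2 (map ((*) (tot xs2)) (signs xs2))"
          using fab a' b' unfolding f_def by simp
      qed (use p1 p2 in auto)
      moreover then have "xs1 = xs2" using key_inj[OF d1' k1 t1 t2] by blast
      ultimately show "a = b" using a' b' by simp
    qed
    have "card S \<le> card R"
      by (rule card_inj_on_le[OF inj img]) (simp add: R_def)
    also have "card R \<le> 2 * \<delta> * n"
    proof (cases "k = 1")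
      case True
      then have "card R = n + 1" unfolding R_def by simp
      also have "\<dots> \<le> 2 * n" using n1 by simp
      also have "\<dots> \<le> 2 * \<delta> * n" using d1 by simp
      finally show ?thesis .
    next
      case False
      then have "card R = nat (2 * int \<delta> * int n - 1)" unfolding R_def by (simp add: algebra_simps)
      also have "\<dots> \<le> nat (2 * int \<delta> * int n)" by (intro nat_mono) simp
      also have "\<dots> = 2 * \<delta> * n" by (simp add: nat_mult_distrib)
      finally show ?thesis .
    qed
    finally have "(card A choose k) * zeta k \<delta> \<le> 2 * \<delta> * n"
      unfolding S_def card_cartesian_product cBs cDev by simp
    then show ?thesis using False by simp
  qed
qed



lemma alt_rep: "j \<le> k \<Longrightarrow> alt_psum (replicate k 1) j = (if even j then 0 else 1)"
proof (induction j)
  case 0 then show ?case by (simp add: alt_psum_0)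
next
  case (Suc j)
  then have "alt_psum (replicate k 1) (Suc j) = alt_psum (replicate k 1) j + (-1) ^ j"
    unfolding alt_psum_def by simp
  then show ?case using Suc by auto
qed

lemma dev_rep: "k \<ge> 1 \<Longrightarrow> \<delta> \<ge> 1 \<Longrightarrow> is_dev_set k \<delta> (replicate k 1)"
  unfolding is_dev_set_def using alt_rep by (auto simp: sum_list_replicate)

lemma dev_signs_img:
  assumes "k \<ge> 1"
  shows "signs ` {xs. is_dev_set k \<delta> xs} \<subseteq> (Cons 1) ` {l. set l \<subseteq> {-1, 1} \<and> length l = k - 1}"
proof
  fix l assume "l \<in> signs ` {xs. is_dev_set k \<delta> xs}"
  then obtain xs where xs: "is_dev_set k \<delta> xs" "l = signs xs" by auto
  note b = dev_basic[OF xs(1) assms]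
  have "l \<noteq> []" using b(1) xs assms by auto
  then obtain a l' where "l = a # l'" by (cases l) auto
  moreover have "a = 1" using b(5) xs calculation by (metis nth_Cons_0)
  moreover have "set l' \<subseteq> {-1, 1}" "length l' = k - 1"
  proof -
    have "set l \<subseteq> {-1, 1}" "length l = k" using b(1,2) xs by auto
    then show "set l' \<subseteq> {-1, 1}" "length l' = k - 1" using \<open>l = a # l'\<close> by auto
  qed
  ultimately show "l \<in> (Cons 1) ` {l. set l \<subseteq> {-1, 1} \<and> length l = k - 1}" by blast
qed

lemma dev_inj: "inj_on signs {xs. is_dev_set k \<delta> xs}"
  by (rule inj_onI) (use signs_inj in \<open>auto simp: is_dev_set_def\<close>)

lemma zeta_pos: assumes "k \<ge> 1" "\<delta> \<ge> 1" shows "zeta k \<delta> > 0"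
proof -
  have fin: "finite {xs. is_dev_set k \<delta> xs}"
    by (rule inj_on_finite[OF dev_inj dev_signs_img[OF assms(1)]]) (simp add: finite_lists_length_eq)
  moreover have "replicate k 1 \<in> {xs. is_dev_set k \<delta> xs}" using dev_rep assms by simp
  ultimately show ?thesis unfolding zeta_def by (simp add: card_gt_0_iff) blast
qed

lemma zeta_le: assumes "k \<ge> 1" shows "zeta k \<delta> \<le> 2 ^ (k - 1)"
proof -
  have "zeta k \<delta> \<le> card ((Cons 1) ` {l. set l \<subseteq> {-1::int, 1} \<and> length l = k - 1})"
    unfolding zeta_def
    by (rule card_inj_on_le[OF dev_inj dev_signs_img[OF assms]]) (simp add: finite_lists_length_eq)
  also have "\<dots> \<le> card {l. set l \<subseteq> {-1::int, 1} \<and> length l = k - 1}" by (rule card_image_le) (simp add: finite_lists_length_eq)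
  also have "\<dots> = card {-1::int, 1} ^ (k - 1)" by (rule card_lists_length_eq) simp
  also have "card {-1::int, 1} = 2" by simp
  finally show ?thesis .
qed

lemma multiset_bound:
  assumes bk: "is_Bk k A" and sub: "A \<subseteq> {0..n}"
  shows "(card A + k - 1) choose k \<le> k * n + 1"
proof -
  have finA: "finite A" using bk unfolding is_Bk_def by simp
  have "card (multisets_of_size A k) \<le> card {0..k * n}"
  proof (rule card_inj_on_le)
    show "inj_on sum_mset (multisets_of_size A k)"
      using bk unfolding is_Bk_def multisets_of_size_def by (auto intro: inj_onI)
    show "sum_mset ` multisets_of_size A k \<subseteq> {0..k * n}"
    proof
      fix s assume "s \<in> sum_mset ` multisets_of_size A k"
      then obtain X where X: "set_mset X \<subseteq> A" "size X = k" "s = sum_mset X"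
        unfolding multisets_of_size_def by auto
      have "sum_mset X \<le> sum_mset (image_mset (\<lambda>_. n) X)"
      proof -
        have "sum_mset (image_mset id X) \<le> sum_mset (image_mset (\<lambda>_. n) X)"
          by (rule sum_mset_mono) (use X sub in auto)
        then show ?thesis by simp
      qed
      then show "s \<in> {0..k * n}" using X by (simp add: mult.commute)
    qed
  qed simp
  then show ?thesis using card_multisets_of_size[OF finA] by simp
qed

lemma choose_ge: assumes "k \<ge> 1" "N \<ge> k + 1" shows "N choose k \<ge> k + 1"
  using assms(2)
proof (induction N rule: dec_induct)
  case base then show ?case by simp
next
  case (step N)
  obtain k' where k': "k = Suc k'" using assms(1) by (cases k) auto
  have "N choose k \<le> Suc N choose k" unfolding k' by simp
  then show ?case using step by linarith
qed



lemma e_ge: "exp 1 \<ge> (8/3::real)"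
proof -
  have e3: "exp (1::real) = exp (1/3) ^ 3" using exp_of_nat_mult[of 3 "1/3::real"] by simp
  have "exp (1/3::real) \<ge> 25/18"
    using exp_lower_Taylor_quadratic[of "1/3::real"] by (simp add: power2_eq_square)
  then have "exp (1/3::real) ^ 3 \<ge> (25/18) ^ 3" by (intro power_mono) auto
  moreover have "(25/18::real) ^ 3 \<ge> 8/3" by (simp add: power_divide)
  ultimately show ?thesis unfolding e3 by linarith
qed

lemma Qk: assumes "k \<ge> (1::nat)" shows "(2 / exp 1) ^ k * (real k + 1) \<le> 2"
proof -
  define r where "r = 2 / exp (1::real)"
  have r0: "r > 0" unfolding r_def by simp
  have r34: "r \<le> 3/4" unfolding r_def using e_ge by (simp add: divide_le_eq)
  show ?thesis
  proof (cases "k = 1")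
    case True then show ?thesis using r34 unfolding r_def[symmetric] by simp
  next
    case False
    then have k2: "k \<ge> 2" using assms by simp
    have "r ^ k * (real k + 1) \<le> 2" using k2
    proof (induction k rule: dec_induct)
      case base
      have "r ^ 2 \<le> (3/4) ^ 2" using r0 r34 by (intro power_mono) auto
      then have "r ^ 2 \<le> 9/16" by (simp add: power_divide)
      then show ?case by simp
    next
      case (step k)
      have "r * (real k + 2) \<le> real k + 1" using r34 step(1) r0
      proof -
        have "r * (real k + 2) \<le> 3/4 * (real k + 2)" using r34 by (intro mult_right_mono) auto
        also have "\<dots> \<le> real k + 1" using step(1) by simp
        finally show ?thesis .
      qed
      then have "r ^ Suc k * (real (Suc k) + 1) = r ^ k * (r * (real k + 2))" by (simp add: algebra_simps)
      also have "\<dots> \<le> r ^ k * (real k + 1)"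
        using \<open>r * (real k + 2) \<le> real k + 1\<close> r0 by (intro mult_left_mono) auto
      also have "\<dots> \<le> 2" by (rule step(3))
      finally show ?case .
    qed
    then show ?thesis unfolding r_def .
  qed
qed

lemma root_le: assumes "0 \<le> x" "x ^ k \<le> y" "k \<ge> 1" shows "x \<le> y powr (1 / real k)"
proof (cases "x = 0")
  case True then show ?thesis by simp
next
  case False
  then have xp: "x > 0" using assms by simp
  have "x = (x ^ k) powr (1 / real k)"
    using xp assms(3) by (simp add: powr_realpow[symmetric] powr_powr)
  also have "\<dots> \<le> y powr (1 / real k)" using assms xp by (intro powr_mono2) auto
  finally show ?thesis .
qed

lemma falling: "real (m choose k) * fact k = (\<Prod>i<k. real m - real i)"
proof -
  have "real (m choose k) = (\<Prod>i=0..<k. real m - of_nat i) / fact k"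
    using binomial_gbinomial[of m k, where 'a=real] by (simp add: gbinomial_prod_rev)
  then show ?thesis by (simp add: atLeast0LessThan)
qed



lemma bound_A:
  fixes k n \<delta> :: nat
  assumes bk: "is_Bk k A" and sub: "A \<subseteq> {0..n}" and k1: "k > 0" and n1: "n > 0" and d1: "\<delta> > 0"
  shows "real (card A) \<le>
    (real \<delta> * (1 + (if even k then 0 else 1)) * fact k / real (zeta k \<delta>)) powr (1 / real k)
      * real n powr (1 / real k) + (exp 1 - 1) / exp 1 * real k"
proof -
  define m where "m = card A"
  define c where "c = (exp (1::real) - 1) / exp 1"
  define tau where "tau = (if even k then 0 else 1::real)"
  define z where "z = real (zeta k \<delta>)"
  define D where "D = real \<delta> * (1 + tau) * fact k / z"
  have c01: "0 < c" "c < 1" unfolding c_def using e_gt1 by (auto simp: field_simps)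
  have c_half: "c > 1/2"
  proof -
    have "exp (1::real) \<ge> 8/3" by (rule e_ge)
    then show ?thesis unfolding c_def by (simp add: field_simps)
  qed
  have oc: "1 - c = 1 / exp 1" unfolding c_def by (simp add: field_simps)
  have zpos: "z > 0" unfolding z_def using zeta_pos[of k \<delta>] k1 d1 by simp
  have Dnn: "D \<ge> 0" unfolding D_def tau_def using zpos by simp
  have rhs_nn: "0 \<le> D powr (1 / real k) * real n powr (1 / real k)" by simp
  have main: "real m - c * real k \<le> (D * real n) powr (1 / real k)" if gt: "real m > c * real k"
  proof -
    have "(real m - c * real k) ^ k \<le> D * real n"
    proof (cases "k \<le> m")
      case True
      have cnt: "(m choose k) * zeta k \<delta> \<le> (if even k then 1 else 2) * \<delta> * n"
        unfolding m_def using count_main[OF bk sub] k1 d1 n1 by simp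
      then have "real ((m choose k) * zeta k \<delta>) \<le> real ((if even k then 1 else 2) * \<delta> * n)"
        by (rule of_nat_mono)
      then have cntr: "real (m choose k) * z \<le> (1 + tau) * real \<delta> * real n"
        unfolding z_def tau_def by (cases "even k") simp_all
      have "(real m - c * real k) ^ k \<le> (\<Prod>i<k. real m - real i)"
        unfolding c_def using prod_bound[of k m] k1 True by simp
      also have "\<dots> = real (m choose k) * fact k" by (rule falling[symmetric])
      also have "\<dots> \<le> D * real n"
      proof -
        have "real (m choose k) * fact k * z \<le> (1 + tau) * real \<delta> * real n * fact k"
          using cntr by (simp add: mult.commute mult.left_commute mult_right_mono)
        then show ?thesis unfolding D_def using zpos by (simp add: field_simps)
      qed
      finally show ?thesis .
    next
      case False
      then have mk: "m < k" by simp
      have m2: "m \<ge> 2"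
      proof (rule ccontr)
        assume "\<not> m \<ge> 2"
        then have "real m \<le> 1" by simp
        moreover have "k \<ge> 2 \<or> m = 0" using mk \<open>\<not> m \<ge> 2\<close> by linarith
        moreover have "c * real k \<ge> 0" using c01 by simp
        moreover have "k \<ge> 2 \<Longrightarrow> c * real k \<ge> 2 * c" using c01 by simp
        ultimately show False
        proof (elim disjE)
          assume "k \<ge> 2"
          then have "c * real k \<ge> c * 2" using c01 by (intro mult_left_mono) auto
          then show False using gt c_half \<open>real m \<le> 1\<close> by linarith
        next
          assume "m = 0"
          then show False using gt \<open>c * real k \<ge> 0\<close> by simp
        qed
      qed
      define N where "N = m + k - 1"
      have CN1: "N choose k \<le> k * n + 1" unfolding N_def m_def by (rule multiset_bound[OF bk sub])
      have CN2: "N choose k \<ge> k + 1" unfolding N_def using choose_ge[of k "m + k - 1"] k1 m2 by simp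
      have prodge: "real (N choose k) * fact k \<ge> real m ^ k"
      proof -
        have "real m ^ k = (\<Prod>i<k. real m)" by simp
        also have "\<dots> \<le> (\<Prod>i<k. real N - real i)"
          by (rule prod_mono) (auto simp: N_def)
        also have "\<dots> = real (N choose k) * fact k" by (rule falling[symmetric])
        finally show ?thesis .
      qed
      have "real (zeta k \<delta>) \<le> real (2 ^ (k - 1))" using zeta_le[of k \<delta>] k1 by (intro of_nat_mono) auto
      then have zle: "z \<le> 2 ^ (k - 1)" unfolding z_def by simp
      have pos: "0 < real m - c * real k" using gt by simp
      have le1: "real m - c * real k \<le> real m / exp 1"
      proof -
        have "c * real m \<le> c * real k" using mk c01 by simp
        then have "real m - c * real k \<le> real m * (1 - c)" by (simp add: algebra_simps)
        then show ?thesis unfolding oc by simp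
      qed
      have "(real m - c * real k) ^ k * z \<le> (real m / exp 1) ^ k * 2 ^ (k - 1)"
        using pos le1 zpos zle by (intro mult_mono power_mono) auto
      also have "\<dots> = real m ^ k * ((2 / exp 1) ^ k * (real k + 1)) / (2 * (real k + 1))"
      proof -
        have p: "(2::real) ^ (k - 1) = 2 ^ k / 2" using k1 by (cases k) auto
        have gen: "a / b * (q / 2) = a * (q / b * r) / (2 * r)" if "b > 0" "r > 0" for a b q r :: real
          using that by (simp add: field_simps)
        show ?thesis unfolding p power_divide by (rule gen) auto
      qed
      also have "\<dots> \<le> real m ^ k * 2 / (2 * (real k + 1))"
        using Qk[of k] k1 by (intro divide_right_mono mult_left_mono) auto
      also have "\<dots> = real m ^ k / (real k + 1)"
      proof -
        have "real k + 1 > 0" by simp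
        then show ?thesis by (simp add: field_simps)
      qed
      also have "\<dots> \<le> real (N choose k) * fact k / (real k + 1)"
        using prodge by (intro divide_right_mono) auto
      also have "\<dots> \<le> fact k * real n"
      proof -
        have a: "real (N choose k) \<le> real k * real n + 1" using of_nat_mono[OF CN1, where 'a=real] by simp
        have b: "real (N choose k) \<ge> real k + 1" using of_nat_mono[OF CN2, where 'a=real] by simp
        have "real (N choose k) \<le> (real k + 1) * real n"
        proof -
          have "real (N choose k) * real k \<le> (real k + 1) * (real (N choose k) - 1)" using b by (simp add: algebra_simps)
          also have "\<dots> \<le> (real k + 1) * (real k * real n)" using a by (intro mult_left_mono) auto
          finally have "real k * real (N choose k) \<le> real k * ((real k + 1) * real n)" by (simp add: algebra_simps)
          then show ?thesis using k1 by simp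
        qed
        then have "real (N choose k) * fact k \<le> (real k + 1) * real n * fact k" by (intro mult_right_mono) auto
        then show ?thesis by (simp add: field_simps)
      qed
      finally have "(real m - c * real k) ^ k * z \<le> fact k * real n" .
      moreover have "fact k * real n \<le> D * real n * z"
      proof -
        have "1 \<le> real \<delta> * (1 + tau)" using d1 unfolding tau_def by simp
        then have "fact k * real n \<le> real \<delta> * (1 + tau) * fact k * real n"
          by (simp add: mult_right_mono mult_left_mono)
        moreover have "D * real n * z = real \<delta> * (1 + tau) * fact k * real n"
          unfolding D_def using zpos by simp
        ultimately show ?thesis by linarith
      qed
      ultimately have "(real m - c * real k) ^ k * z \<le> D * real n * z" by linarith
      then show ?thesis using zpos by simp
    qed
    then show ?thesis using root_le[of "real m - c * real k" k "D * real n"] gt k1 by simp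
  qed
  show ?thesis
  proof (cases "real m > c * real k")
    case True
    have "real m \<le> (D * real n) powr (1 / real k) + c * real k" using main[OF True] by simp
    also have "(D * real n) powr (1 / real k) = D powr (1 / real k) * real n powr (1 / real k)"
      using Dnn by (simp add: powr_mult)
    finally show ?thesis unfolding m_def D_def z_def tau_def c_def by simp
  next
    case False
    then have "real m \<le> c * real k" by simp
    then have "real m \<le> D powr (1 / real k) * real n powr (1 / real k) + c * real k" using rhs_nn by linarith
    then show ?thesis unfolding m_def D_def z_def tau_def c_def by simp
  qed
qed



theorem theorem1:
  fixes k n \<delta> :: nat
  assumes "k > 0" and "n > 0" and "\<delta> > 0"
  shows "real (Phi k n) \<le>
    (real \<delta> * (1 + (if even k then 0 else 1)) * fact k / real (zeta k \<delta>)) powr (1 / real k)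
      * real n powr (1 / real k) + (exp 1 - 1) / exp 1 * real k"
proof -
  define S where "S = {card A | A. A \<subseteq> {0..n} \<and> is_Bk k A}"
  have "S \<subseteq> card ` Pow {0..n}" unfolding S_def by auto
  then have fin: "finite S" by (rule finite_subset) simp
  have "is_Bk k {}" unfolding is_Bk_def using assms(1) by auto
  then have "0 \<in> S" unfolding S_def by force
  then have "Max S \<in> S" using fin by (intro Max_in) auto
  then obtain A where A: "Phi k n = card A" "A \<subseteq> {0..n}" "is_Bk k A"
    unfolding S_def Phi_def by auto
  show ?thesis unfolding A(1) by (rule bound_A[OF A(3) A(2) assms])
qed


end
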